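(* Consider the random coefficients perturbed utility model in which optimizing choices satisfy $Y(X,\beta,\varepsilon) \in \arg\max_{y \in B} \sum_{k=1}^K y_k(\beta_k' X_k) + D(y,\varepsilon)$, where $X=(X_1',\ldots,X_K')'$ with $X_k=(X_{k,1},\ldots,X_{k,d_k})'$ and $\beta=(\beta_1',\ldots,\beta_K')'$ with $\beta_k=(\beta_{k,1},\ldots,\beta_{k,d_k})'$. Let $\overline{Y}(x)=\int Y(x,\beta,\varepsilon)\,d\tau(\beta,\varepsilon)$ be the average structural function, let $\overline{Y}(x,\beta)=\int Y(x,\beta,\varepsilon)\,d\mu(\varepsilon)$, and let $V(\beta_1'x_1,\ldots,\beta_K'x_K)=\max_{y\in\overline{B}}\sum_{k=1}^K y_k(\beta_k'x_k)+\overline{D}(y)$ be the integrated indirect utility function. Suppose that for each natural number $M \le \overline{M}$ (where $\overline{M}$ could be $\infty$) the following hold: (a) (Slope-intercept independence) $\beta$ and $\varepsilon$ are independent under $\tau$, so $\tau=\nu\times\mu$ with $\nu$ the distribution of $\beta$ and $\mu$ that of $\varepsilon$, and $\overline{Y}(x)$ is finite; (b) $\overline{Y}(x,\beta)$ is the unique element of $\arg\max_{y\in\overline{B}}\sum_{k=1}^K y_k(\beta_k'x_k)+\overline{D}(y)$, where $\overline{B}\subseteq\mathbb{R}^K$ is nonempty, closed and convex, and $\overline{D}:\mathbb{R}^K\to\mathbb{R}\cup\{-\infty\}$ is concave, upper semi-continuous and finite at some $y\in\overline{B}$; (c) all covariates are continuous and each $x_k$ is a vector of regressors specific to good $k$ (excluded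 from the other goods' indices); (d) (Regularity) (i) for each good $k$, integration over $\nu$ and all $M$-th order partial derivatives in $x$ of $\overline{Y}_k(x,\beta)$ at $x=0$ can be interchanged; (ii) every $M$-th order moment $\int \beta_{k_1,\ell_1}\cdots\beta_{k_M,\ell_M}\,d\nu(\beta)$ exists and is finite; (iii) $V$ is $(M+1)$-times continuously differentiable in a neighborhood of $0$; (iv) $\partial_\gamma V(0)\neq 0$ for every $\gamma\in\{1,\ldots,K\}^{M+1}$; (v) $\overline{Y}(x)$ is known in a neighborhood of $x=0$, or more generally in a neighborhood of $0$ intersected with the weakly positive orthant of $\mathbb{R}^{\sum_k d_k}$; (e) (Relevance) for each tuple of good indices $(k_1,\ldots,k_M)\in\{1,\ldots,K\}^M$ there is a tuple of characteristic indices $(\ell_1,\ldots,\ell_M)\in\prod_{m=1}^M\{1,\ldots,d_{k_m}\}$ such that $\int \beta_{k_1,\ell_1}\cdots\beta_{k_M,\ell_M}\,d\nu(\beta)$ exists and is nonzero; (f) under $\nu$, $\beta_{1,1}$ is independent of all other components of $\beta$, and $|\int\beta_{1,1}\,d\nu(\beta)|$ is finite, known a priori, and nonzero. If $K\ge 2$, then for each $M\le\overline{M}$ every $M$-th order moment $\int \beta_{k_1,\ell_1}\cdots\beta_{k_M,\ell_M}\,d\nu(\beta)$ is identified, and for each $\gamma\in\{1,\ldots,K\}^{M+1}$ the derivative $\partial_\gamma V(0)$ is identified. If $K=1$, the same conclusions hold under conditions (a)–(f) given the additional assumption that for each $M\le\overline{M}$ there exists an order $M-1$ moment with $\int \beta_{1,\ell_1}\cdots\beta_{1,\ell_{M-1}}\,d\nu(\beta)\neq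 0$, where $\ell_m\neq 1$ for every $m\in\{1,\ldots,M-1\}$.
   Context: Here $\partial_\gamma f=\partial_{\gamma_1}\cdots\partial_{\gamma_M}f$ for an index vector $\gamma$, with $\partial_k$ denoting the derivative with respect to the $k$-th argument of $V$; $B\subseteq\mathbb{R}^K$ is a feasibility set with convex hull $\overline{B}$; $D(y,\varepsilon)$ is a disturbance (random intercept) that may take the value $-\infty$; and $\overline{D}(y)=\sup_{\tilde Y:\int \tilde Y(\varepsilon)d\mu(\varepsilon)=y}\int D(\tilde Y(\varepsilon),\varepsilon)\,d\mu(\varepsilon)$ over $\varepsilon$-measurable $\tilde Y$ mapping into $B$. This result replaces the scale assumption that $\int\beta_{1,1}^M d\nu(\beta)$ is known and nonzero (used in the paper's main theorem) by independence of $\beta_{1,1}$ plus a single scale assumption on its first moment. *)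

theory Defs
  imports "HOL-Probability.Probability"
begin

text \<open>
Goods are indexed by a finite type 'k (K = CARD('k)); regressor coordinates
(k,l), l = 1..d_k, are indexed by a finite type 'r together with the map
good :: 'r => 'k sending a coordinate to the good it belongs to (so x_k is the
subvector of x on the coordinates r with good r = k).
\<close>

definition idx :: "('r::finite \<Rightarrow> 'k::finite) \<Rightarrow> real^'r \<Rightarrow> real^'r \<Rightarrow> real^'k" where
  "idx good x \<beta> = (\<chi> k. \<Sum>r\<in>{r. good r = k}. \<beta>$r * x$r)"

definition optimal_choices ::
  "('r::finite \<Rightarrow> 'k::finite) \<Rightarrow> (real^'k) set \<Rightarrow> (real^'k \<Rightarrow> 'e \<Rightarrow> ereal)
   \<Rightarrow> (real^'r \<Rightarrow> real^'r \<Rightarrow> 'e \<Rightarrow> real^'k) \<Rightarrow> bool" where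
  "optimal_choices good B D Y \<longleftrightarrow>
     (\<forall>y \<epsilon>. D y \<epsilon> \<noteq> \<infinity>) \<and>
     (\<forall>x \<beta> \<epsilon>. Y x \<beta> \<epsilon> \<in> B \<and>
        (\<forall>y\<in>B. ereal (y \<bullet> idx good x \<beta>) + D y \<epsilon>
                \<le> ereal (Y x \<beta> \<epsilon> \<bullet> idx good x \<beta>) + D (Y x \<beta> \<epsilon>) \<epsilon>))"

definition Ybar_xb :: "'e measure \<Rightarrow> (real^'r \<Rightarrow> real^'r \<Rightarrow> 'e \<Rightarrow> real^'k::finite)
   \<Rightarrow> real^'r \<Rightarrow> real^'r \<Rightarrow> real^'k" where
  "Ybar_xb \<mu> Y x \<beta> = (\<integral>\<epsilon>. Y x \<beta> \<epsilon> \<partial>\<mu>)"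

definition Ybar :: "(real^'r::finite) measure \<Rightarrow> 'e measure
   \<Rightarrow> (real^'r \<Rightarrow> real^'r \<Rightarrow> 'e \<Rightarrow> real^'k::finite) \<Rightarrow> real^'r \<Rightarrow> real^'k" where
  "Ybar \<nu> \<mu> Y x = (\<integral>z. Y x (fst z) (snd z) \<partial>(\<nu> \<Otimes>\<^sub>M \<mu>))"

text \<open>Extended-real integral of a function with values in [-inf, inf]:
int f+ - int f-, taken as -infinity when both parts are infinite (undefined).\<close>
definition eint :: "'e measure \<Rightarrow> ('e \<Rightarrow> ereal) \<Rightarrow> ereal" where
  "eint \<mu> f =
     (let p = (\<integral>\<^sup>+\<epsilon>. e2ennreal (f \<epsilon>) \<partial>\<mu>);
          n = (\<integral>\<^sup>+\<epsilon>. e2ennreal (- f \<epsilon>) \<partial>\<mu>)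
      in if p = \<infinity> \<and> n = \<infinity> then - \<infinity> else enn2ereal p - enn2ereal n)"

definition Bbar :: "(real^'k::finite) set \<Rightarrow> (real^'k) set" where
  "Bbar B = convex hull B"

definition Dbar :: "'e measure \<Rightarrow> (real^'k::finite) set \<Rightarrow> (real^'k \<Rightarrow> 'e \<Rightarrow> ereal)
   \<Rightarrow> real^'k \<Rightarrow> ereal" where
  "Dbar \<mu> B D y = Sup {eint \<mu> (\<lambda>\<epsilon>. D (Yt \<epsilon>) \<epsilon>) | Yt.
       Yt \<in> borel_measurable \<mu> \<and> (\<forall>\<epsilon>\<in>space \<mu>. Yt \<epsilon> \<in> B) \<and>
       integrable \<mu> Yt \<and> (\<integral>\<epsilon>. Yt \<epsilon> \<partial>\<mu>) = y}"

definition Vfun :: "'e measure \<Rightarrow> (real^'k::finite) set \<Rightarrow> (real^'k \<Rightarrow> 'e \<Rightarrow> ereal)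
   \<Rightarrow> real^'k \<Rightarrow> real" where
  "Vfun \<mu> B D u = real_of_ereal (Sup {ereal (y \<bullet> u) + Dbar \<mu> B D y | y. y \<in> Bbar B})"

fun pdiff :: "'i::finite list \<Rightarrow> (real^'i \<Rightarrow> real) \<Rightarrow> real^'i \<Rightarrow> real" where
  "pdiff [] f = f"
| "pdiff (i # \<gamma>) f = (\<lambda>x. deriv (\<lambda>t. pdiff \<gamma> f (x + t *\<^sub>R axis i 1)) 0)"

fun pd_exists :: "'i::finite list \<Rightarrow> (real^'i \<Rightarrow> real) \<Rightarrow> real^'i \<Rightarrow> bool" where
  "pd_exists [] f x = True"
| "pd_exists (i # \<gamma>) f x =
     ((\<forall>\<^sub>F z in nhds x. pd_exists \<gamma> f z) \<and>
      (\<lambda>t. pdiff \<gamma> f (x + t *\<^sub>R axis i 1)) differentiable (at 0))"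

definition Ck_on :: "nat \<Rightarrow> (real^'i::finite) set \<Rightarrow> (real^'i \<Rightarrow> real) \<Rightarrow> bool" where
  "Ck_on m U f \<longleftrightarrow> (\<forall>\<gamma>. length \<gamma> \<le> m \<longrightarrow>
      (\<forall>z\<in>U. pd_exists \<gamma> f z) \<and> continuous_on U (pdiff \<gamma> f))"

definition moment :: "(real^'r::finite) measure \<Rightarrow> 'r list \<Rightarrow> real" where
  "moment \<nu> rs = (\<integral>\<beta>. prod_list (map (\<lambda>r. \<beta>$r) rs) \<partial>\<nu>)"

definition moment_exists :: "(real^'r::finite) measure \<Rightarrow> 'r list \<Rightarrow> bool" where
  "moment_exists \<nu> rs \<longleftrightarrow> integrable \<nu> (\<lambda>\<beta>. prod_list (map (\<lambda>r. \<beta>$r) rs))"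

definition assm_a :: "(real^'r::finite) measure \<Rightarrow> 'e measure
   \<Rightarrow> (real^'r \<Rightarrow> real^'r \<Rightarrow> 'e \<Rightarrow> real^'k::finite) \<Rightarrow> bool" where
  "assm_a \<nu> \<mu> Y \<longleftrightarrow> prob_space \<nu> \<and> sets \<nu> = sets borel \<and> prob_space \<mu> \<and>
     (\<forall>x. integrable (\<nu> \<Otimes>\<^sub>M \<mu>) (\<lambda>z. Y x (fst z) (snd z)))"

definition assm_b :: "('r::finite \<Rightarrow> 'k::finite) \<Rightarrow> 'e measure \<Rightarrow> (real^'k) set
   \<Rightarrow> (real^'k \<Rightarrow> 'e \<Rightarrow> ereal) \<Rightarrow> (real^'r \<Rightarrow> real^'r \<Rightarrow> 'e \<Rightarrow> real^'k) \<Rightarrow> bool" where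
  "assm_b good \<mu> B D Y \<longleftrightarrow>
     Bbar B \<noteq> {} \<and> closed (Bbar B) \<and> convex (Bbar B) \<and>
     (\<forall>y. Dbar \<mu> B D y \<noteq> \<infinity>) \<and>
     (\<forall>y z t. 0 < t \<longrightarrow> t < 1 \<longrightarrow>
        ereal t * Dbar \<mu> B D y + ereal (1 - t) * Dbar \<mu> B D z
          \<le> Dbar \<mu> B D (t *\<^sub>R y + (1 - t) *\<^sub>R z)) \<and>
     (\<forall>y c. Dbar \<mu> B D y < c \<longrightarrow> (\<forall>\<^sub>F z in nhds y. Dbar \<mu> B D z < c)) \<and>
     (\<exists>y\<in>Bbar B. Dbar \<mu> B D y \<noteq> - \<infinity>) \<and>
     (\<forall>x \<beta>. {y \<in> Bbar B. \<forall>z\<in>Bbar B.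
               ereal (z \<bullet> idx good x \<beta>) + Dbar \<mu> B D z
                 \<le> ereal (y \<bullet> idx good x \<beta>) + Dbar \<mu> B D y}
             = {Ybar_xb \<mu> Y x \<beta>})"

definition assm_d :: "nat \<Rightarrow> (real^'r::finite) measure \<Rightarrow> 'e measure \<Rightarrow> (real^'k::finite) set
   \<Rightarrow> (real^'k \<Rightarrow> 'e \<Rightarrow> ereal) \<Rightarrow> (real^'r \<Rightarrow> real^'r \<Rightarrow> 'e \<Rightarrow> real^'k) \<Rightarrow> bool" where
  "assm_d M \<nu> \<mu> B D Y \<longleftrightarrow>
     (\<forall>k \<gamma>. length \<gamma> = M \<longrightarrow>
        pd_exists \<gamma> (\<lambda>x. \<integral>\<beta>. Ybar_xb \<mu> Y x \<beta> $ k \<partial>\<nu>) 0 \<and>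
        (AE \<beta> in \<nu>. pd_exists \<gamma> (\<lambda>x. Ybar_xb \<mu> Y x \<beta> $ k) 0) \<and>
        integrable \<nu> (\<lambda>\<beta>. pdiff \<gamma> (\<lambda>x. Ybar_xb \<mu> Y x \<beta> $ k) 0) \<and>
        pdiff \<gamma> (\<lambda>x. \<integral>\<beta>. Ybar_xb \<mu> Y x \<beta> $ k \<partial>\<nu>) 0
          = (\<integral>\<beta>. pdiff \<gamma> (\<lambda>x. Ybar_xb \<mu> Y x \<beta> $ k) 0 \<partial>\<nu>)) \<and>
     (\<forall>rs. length rs = M \<longrightarrow> moment_exists \<nu> rs) \<and>
     (\<exists>U. open U \<and> 0 \<in> U \<and> Ck_on (Suc M) U (Vfun \<mu> B D)) \<and>
     (\<forall>\<gamma>::'k list. length \<gamma> = Suc M \<longrightarrow> pdiff \<gamma> (Vfun \<mu> B D) 0 \<noteq> 0)"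

definition assm_e :: "nat \<Rightarrow> ('r::finite \<Rightarrow> 'k::finite) \<Rightarrow> (real^'r) measure \<Rightarrow> bool" where
  "assm_e M good \<nu> \<longleftrightarrow>
     (\<forall>ks::'k list. length ks = M \<longrightarrow>
        (\<exists>rs. map good rs = ks \<and> moment_exists \<nu> rs \<and> moment \<nu> rs \<noteq> 0))"

definition assm_f :: "'r::finite \<Rightarrow> (real^'r) measure \<Rightarrow> bool" where
  "assm_f r1 \<nu> \<longleftrightarrow>
     (\<forall>A \<in> sets (borel :: real measure). \<forall>C \<in> sets (borel :: (real^'r) measure).
        measure \<nu> {\<beta>\<in>space \<nu>. \<beta>$r1 \<in> A \<and> (\<chi> r. if r = r1 then 0 else \<beta>$r) \<in> C}
        = measure \<nu> {\<beta>\<in>space \<nu>. \<beta>$r1 \<in> A}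
          * measure \<nu> {\<beta>\<in>space \<nu>. (\<chi> r. if r = r1 then 0 else \<beta>$r) \<in> C}) \<and>
     integrable \<nu> (\<lambda>\<beta>. \<beta>$r1) \<and> (\<integral>\<beta>. \<beta>$r1 \<partial>\<nu>) \<noteq> 0"

definition model_assumptions :: "('r::finite \<Rightarrow> 'k::finite) \<Rightarrow> 'r \<Rightarrow> enat
   \<Rightarrow> (real^'r) measure \<Rightarrow> 'e measure \<Rightarrow> (real^'k) set
   \<Rightarrow> (real^'k \<Rightarrow> 'e \<Rightarrow> ereal) \<Rightarrow> (real^'r \<Rightarrow> real^'r \<Rightarrow> 'e \<Rightarrow> real^'k) \<Rightarrow> bool" where
  "model_assumptions good r1 Mbar \<nu> \<mu> B D Y \<longleftrightarrow>
     optimal_choices good B D Y \<and> assm_a \<nu> \<mu> Y \<and> assm_b good \<mu> B D Y \<and> assm_f r1 \<nu> \<and>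
     (\<forall>M::nat. 1 \<le> M \<longrightarrow> enat M \<le> Mbar \<longrightarrow> assm_d M \<nu> \<mu> B D Y \<and> assm_e M good \<nu>)"

definition K1_condition :: "'r::finite \<Rightarrow> enat \<Rightarrow> (real^'r) measure \<Rightarrow> bool" where
  "K1_condition r1 Mbar \<nu> \<longleftrightarrow>
     (\<forall>M::nat. 1 \<le> M \<longrightarrow> enat M \<le> Mbar \<longrightarrow>
        (\<exists>rs. length rs = M - 1 \<and> (\<forall>r\<in>set rs. r \<noteq> r1) \<and>
              moment_exists \<nu> rs \<and> moment \<nu> rs \<noteq> 0))"

end

theory Submission
  imports Defs
begin


lemma pdiff_append: "pdiff (a @ b) f = pdiff a (pdiff b f)"
  by (induction a) auto

lemma pd_exists_append: "pd_exists (a @ b) f x \<Longrightarrow> pd_exists a (pdiff b f) x"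
  by (induction a arbitrary: x) (auto simp: pdiff_append elim: eventually_mono)

lemma line_tendsto: "((\<lambda>t::real. x + t *\<^sub>R axis i 1) \<longlongrightarrow> (x::real^'i::finite)) (nhds 0)"
proof -
  have "((\<lambda>t::real. x + t *\<^sub>R axis i 1) \<longlongrightarrow> x + 0 *\<^sub>R axis i 1) (nhds 0)"
    by (intro tendsto_intros filterlim_ident)
  then show ?thesis by simp
qed

lemma ev_line: "eventually P (nhds (x::real^'i::finite)) \<Longrightarrow>
   eventually (\<lambda>t::real. P (x + t *\<^sub>R axis i 1)) (nhds 0)"
  using line_tendsto[of x i] unfolding filterlim_iff by blast

lemma pdiff_local:
  fixes f g :: "real^'i::finite \<Rightarrow> real"
  shows "eventually (\<lambda>z. f z = g z) (nhds x) \<Longrightarrow>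
    pdiff \<gamma> f x = pdiff \<gamma> g x \<and> (pd_exists \<gamma> f x \<longleftrightarrow> pd_exists \<gamma> g x)"
proof (induction \<gamma> arbitrary: x)
  case Nil
  then show ?case using eventually_nhds_x_imp_x by auto
next
  case (Cons i \<gamma>)
  have "eventually (\<lambda>z. eventually (\<lambda>w. f w = g w) (nhds z)) (nhds x)"
    using Cons.prems by (simp add: eventually_eventually)
  then have ev: "eventually (\<lambda>z. pdiff \<gamma> f z = pdiff \<gamma> g z \<and> (pd_exists \<gamma> f z \<longleftrightarrow> pd_exists \<gamma> g z)) (nhds x)"
    by (rule eventually_mono) (use Cons.IH in blast)
  have ev2: "eventually (\<lambda>t::real. pdiff \<gamma> f (x + t *\<^sub>R axis i 1) = pdiff \<gamma> g (x + t *\<^sub>R axis i 1)) (nhds 0)"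
    using ev_line[OF ev, of i] by (rule eventually_mono) blast
  have d: "deriv (\<lambda>t. pdiff \<gamma> f (x + t *\<^sub>R axis i 1)) 0 = deriv (\<lambda>t. pdiff \<gamma> g (x + t *\<^sub>R axis i 1)) 0"
    by (rule deriv_cong_ev[OF ev2 refl])
  have dd: "(\<lambda>t. pdiff \<gamma> f (x + t *\<^sub>R axis i 1)) differentiable (at 0) \<longleftrightarrow>
            (\<lambda>t. pdiff \<gamma> g (x + t *\<^sub>R axis i 1)) differentiable (at 0)"
    unfolding real_differentiable_def using DERIV_cong_ev[OF refl ev2 refl] by blast
  have ee: "(\<forall>\<^sub>F z in nhds x. pd_exists \<gamma> f z) \<longleftrightarrow> (\<forall>\<^sub>F z in nhds x. pd_exists \<gamma> g z)"
  proof
    assume "\<forall>\<^sub>F z in nhds x. pd_exists \<gamma> f z"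
    with ev show "\<forall>\<^sub>F z in nhds x. pd_exists \<gamma> g z" by eventually_elim auto
  next
    assume "\<forall>\<^sub>F z in nhds x. pd_exists \<gamma> g z"
    with ev show "\<forall>\<^sub>F z in nhds x. pd_exists \<gamma> f z" by eventually_elim auto
  qed
  show ?case using d dd ee by simp
qed

lemma pdiff_local_open:
  fixes f g :: "real^'i::finite \<Rightarrow> real"
  assumes "open U" "\<And>z. z \<in> U \<Longrightarrow> f z = g z" "x \<in> U"
  shows "pdiff \<gamma> f x = pdiff \<gamma> g x" "pd_exists \<gamma> f x \<longleftrightarrow> pd_exists \<gamma> g x"
proof -
  have "eventually (\<lambda>z. f z = g z) (nhds x)"
    using assms eventually_nhds by blast
  then show "pdiff \<gamma> f x = pdiff \<gamma> g x" "pd_exists \<gamma> f x \<longleftrightarrow> pd_exists \<gamma> g x"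
    using pdiff_local by blast+
qed

lemma idx_sum: "idx good x \<beta> = (\<Sum>r\<in>UNIV. (\<beta>$r * x$r) *\<^sub>R axis (good r) (1::real))"
  unfolding idx_def
  apply (simp add: vec_eq_iff axis_def sum_component if_distrib sum.If_cases cong: if_cong)
  apply (intro allI sum.cong) apply auto done
   
lemma idx_tendsto: "((\<lambda>x. idx good x \<beta>) \<longlongrightarrow> idx good x0 \<beta>) (nhds x0)"
  unfolding idx_sum by (intro tendsto_intros filterlim_ident)

lemma idx_zero[simp]: "idx good 0 \<beta> = 0"
  unfolding idx_def by (simp add: vec_eq_iff)

lemma idx_add: "idx good (x + y) \<beta> = idx good x \<beta> + idx good y \<beta>"
  unfolding idx_sum by (simp add: algebra_simps sum.distrib)

lemma idx_axis: "idx good (t *\<^sub>R axis i 1) \<beta> = (t * \<beta>$i) *\<^sub>R axis (good i) 1"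
proof -
  have "idx good (t *\<^sub>R axis i 1) \<beta> = (\<Sum>r\<in>UNIV. if r = i then (t * \<beta>$i) *\<^sub>R axis (good i) (1::real) else 0)"
    unfolding idx_sum by (intro sum.cong) (auto simp: axis_def)
  then show ?thesis by simp
qed

lemma idx_line: "idx good (z + t *\<^sub>R axis i 1) \<beta> = idx good z \<beta> + (t * \<beta>$i) *\<^sub>R axis (good i) 1"
  by (simp add: idx_add idx_axis)

lemma pdiff_chain:
  fixes G :: "real^'k::finite \<Rightarrow> real" and good :: "'r::finite \<Rightarrow> 'k"
  assumes U: "open U" and ex: "\<And>\<gamma>' w. length \<gamma>' \<le> n \<Longrightarrow> w \<in> U \<Longrightarrow> pd_exists \<gamma>' G w"
  shows "length \<gamma> \<le> n \<Longrightarrow> idx good z \<beta> \<in> U \<Longrightarrow>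
    pdiff \<gamma> (\<lambda>x. G (idx good x \<beta>)) z = prod_list (map (\<lambda>r. \<beta>$r) \<gamma>) * pdiff (map good \<gamma>) G (idx good z \<beta>)"
proof (induction \<gamma> arbitrary: z)
  case Nil
  then show ?case by simp
next
  case (Cons i \<gamma>)
  define u where "u = idx good z \<beta>"
  define j where "j = good i"
  define c where "c = prod_list (map (\<lambda>r. \<beta>$r) \<gamma>)"
  define H where "H = (\<lambda>s. pdiff (map good \<gamma>) G (u + s *\<^sub>R axis j 1))"
  have "((\<lambda>t::real. u + (t * \<beta>$i) *\<^sub>R axis j 1) \<longlongrightarrow> u + (0 * \<beta>$i) *\<^sub>R axis j 1) (nhds 0)"
    by (intro tendsto_intros filterlim_ident)
  then have "eventually (\<lambda>t::real. u + (t * \<beta>$i) *\<^sub>R axis j 1 \<in> U) (nhds 0)"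
    using Cons.prems U by (intro topological_tendstoD) (auto simp: u_def)
  then have ev: "eventually (\<lambda>t. pdiff \<gamma> (\<lambda>x. G (idx good x \<beta>)) (z + t *\<^sub>R axis i 1) = c * H (\<beta>$i * t)) (nhds 0)"
  proof (rule eventually_mono)
    fix t :: real assume "u + (t * \<beta>$i) *\<^sub>R axis j 1 \<in> U"
    then show "pdiff \<gamma> (\<lambda>x. G (idx good x \<beta>)) (z + t *\<^sub>R axis i 1) = c * H (\<beta>$i * t)"
      using Cons.IH[of "z + t *\<^sub>R axis i 1"] Cons.prems
      by (simp add: idx_line u_def j_def c_def H_def mult.commute)
  qed
  have "pd_exists (j # map good \<gamma>) G u"
    using ex[of "j # map good \<gamma>" u] Cons.prems by (simp add: u_def)
  then have "H differentiable (at 0)" by (simp add: H_def)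
  then have dH: "DERIV H 0 :> deriv H 0" by (simp add: DERIV_deriv_iff_real_differentiable)
  have "DERIV (\<lambda>t. H (\<beta>$i * t)) 0 :> deriv H 0 * \<beta>$i"
    by (rule DERIV_chain2[where f=H]) (use dH in simp, auto intro!: derivative_eq_intros)
  then have "DERIV (\<lambda>t. c * H (\<beta>$i * t)) 0 :> c * (deriv H 0 * \<beta>$i)"
    by (rule DERIV_cmult)
  then have "deriv (\<lambda>t. c * H (\<beta>$i * t)) 0 = c * (deriv H 0 * \<beta>$i)"
    by (rule DERIV_imp_deriv)
  moreover have "pdiff (i # \<gamma>) (\<lambda>x. G (idx good x \<beta>)) z = deriv (\<lambda>t. c * H (\<beta>$i * t)) 0"
    using deriv_cong_ev[OF ev refl] by simp
  ultimately show ?case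
    by (simp add: c_def H_def u_def j_def)
qed

lemma line_deriv:
  fixes F :: "real^'i::finite \<Rightarrow> real"
  assumes "(\<lambda>t. F (w0 + s0 *\<^sub>R axis i 1 + t *\<^sub>R axis i 1)) differentiable (at 0)"
  shows "DERIV (\<lambda>s. F (w0 + s *\<^sub>R axis i 1)) s0 :> deriv (\<lambda>t. F (w0 + s0 *\<^sub>R axis i 1 + t *\<^sub>R axis i 1)) 0"
proof -
  have e: "(\<lambda>t. F (w0 + (t + s0) *\<^sub>R axis i 1)) = (\<lambda>t. F (w0 + s0 *\<^sub>R axis i 1 + t *\<^sub>R axis i 1))"
    by (simp add: algebra_simps)
  have "DERIV (\<lambda>t. F (w0 + s0 *\<^sub>R axis i 1 + t *\<^sub>R axis i 1)) 0 :> deriv (\<lambda>t. F (w0 + s0 *\<^sub>R axis i 1 + t *\<^sub>R axis i 1)) 0"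
    using assms DERIV_deriv_iff_real_differentiable by blast
  then have "((\<lambda>t. F (w0 + (t + s0) *\<^sub>R axis i 1)) has_field_derivative deriv (\<lambda>t. F (w0 + s0 *\<^sub>R axis i 1 + t *\<^sub>R axis i 1)) 0) (at 0)"
    by (simp only: e)
  then show ?thesis
    using DERIV_shift[of "\<lambda>s. F (w0 + s *\<^sub>R axis i 1)" _ 0 s0] by simp
qed

lemma norm_two_axes:
  fixes i j :: "'i::finite"
  shows "norm (s *\<^sub>R axis i (1::real) + t *\<^sub>R axis j 1) \<le> \<bar>s\<bar> + \<bar>t\<bar>"
proof -
  have "norm (s *\<^sub>R axis i (1::real) + t *\<^sub>R axis j 1) \<le> norm (s *\<^sub>R axis i (1::real)) + norm (t *\<^sub>R axis j (1::real))"
    by (rule norm_triangle_ineq)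
  also have "\<dots> = \<bar>s\<bar> + \<bar>t\<bar>" by simp
  finally show ?thesis .
qed

lemma mixed_mvt:
  fixes f :: "real^'i::finite \<Rightarrow> real"
  assumes C: "Ck_on 2 U f" and h: "0 < h" and sub: "cball z (2*h) \<subseteq> U"
  shows "\<exists>p. dist p z \<le> 2*h \<and>
    f (z + h *\<^sub>R axis j 1 + h *\<^sub>R axis i 1) - f (z + h *\<^sub>R axis i 1) - f (z + h *\<^sub>R axis j 1) + f z
      = h^2 * pdiff [j,i] f p"
proof -
  define ei where "ei = (axis i 1 :: real^'i)"
  define ej where "ej = (axis j 1 :: real^'i)"
  have inU: "z + s *\<^sub>R ei + t *\<^sub>R ej \<in> U" if "\<bar>s\<bar> \<le> h" "\<bar>t\<bar> \<le> h" for s t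
  proof -
    have "dist z (z + s *\<^sub>R ei + t *\<^sub>R ej) = norm (s *\<^sub>R ei + t *\<^sub>R ej)"
      by (simp add: dist_norm algebra_simps norm_minus_commute)
    also have "\<dots> \<le> 2 * h" using norm_two_axes[of s i t j] that by (simp add: ei_def ej_def)
    finally show ?thesis using sub by auto
  qed
  have inU': "z + t *\<^sub>R ej + s *\<^sub>R ei \<in> U" if "\<bar>s\<bar> \<le> h" "\<bar>t\<bar> \<le> h" for s t
    using inU[OF that] by (simp add: algebra_simps)
  have ex1: "(\<lambda>t. f (w + t *\<^sub>R ei)) differentiable (at 0)" if "w \<in> U" for w
  proof -
    have "pd_exists [i] f w" using C[unfolded Ck_on_def, rule_format, of "[i]"] that by auto
    then show ?thesis unfolding ei_def by simp
  qed
  have ex2: "(\<lambda>t. pdiff [i] f (w + t *\<^sub>R ej)) differentiable (at 0)" if "w \<in> U" for w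
  proof -
    have "pd_exists [j,i] f w" using C[unfolded Ck_on_def, rule_format, of "[j,i]"] that by auto
    then show ?thesis unfolding ej_def by (simp only: pd_exists.simps) 
  qed
  have P1: "pdiff [i] f w = deriv (\<lambda>t. f (w + t *\<^sub>R ei)) 0" for w by (simp add: ei_def)
  have P2: "pdiff [j,i] f w = deriv (\<lambda>t. pdiff [i] f (w + t *\<^sub>R ej)) 0" for w
    by (simp only: pdiff.simps(2) ej_def)
  define g where "g s = f (z + h *\<^sub>R ej + s *\<^sub>R ei) - f (z + s *\<^sub>R ei)" for s
  have dg: "DERIV g s :> pdiff [i] f (z + h *\<^sub>R ej + s *\<^sub>R ei) - pdiff [i] f (z + s *\<^sub>R ei)"
    if "0 \<le> s" "s \<le> h" for s
  proof -
    have a: "DERIV (\<lambda>s. f (z + h *\<^sub>R ej + s *\<^sub>R ei)) s :> pdiff [i] f (z + h *\<^sub>R ej + s *\<^sub>R ei)"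
      unfolding P1 ei_def by (rule line_deriv, fold ei_def, rule ex1, rule inU') (use that h in auto)
    have b: "DERIV (\<lambda>s. f (z + s *\<^sub>R ei)) s :> pdiff [i] f (z + s *\<^sub>R ei)"
      unfolding P1 ei_def by (rule line_deriv, fold ei_def, rule ex1) (use inU'[of s 0] that h in auto)
    show ?thesis unfolding g_def by (rule DERIV_diff[OF a b])
  qed
  have "continuous_on {0..h} g"
    using dg by (intro continuous_at_imp_continuous_on ballI DERIV_isCont) auto
  moreover have "g differentiable (at s)" if "0 < s" "s < h" for s
    using dg[of s] that real_differentiable_def by force
  ultimately obtain l \<xi> where \<xi>: "0 < \<xi>" "\<xi> < h" "DERIV g \<xi> :> l" "g h - g 0 = (h - 0) * l"
    using MVT[OF h, of g] by blast
  have l: "l = pdiff [i] f (z + \<xi> *\<^sub>R ei + h *\<^sub>R ej) - pdiff [i] f (z + \<xi> *\<^sub>R ei + 0 *\<^sub>R ej)"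
    using DERIV_unique[OF \<xi>(3) dg[of \<xi>]] \<xi> by (simp add: algebra_simps)
  define \<phi> where "\<phi> t = pdiff [i] f (z + \<xi> *\<^sub>R ei + t *\<^sub>R ej)" for t
  have d\<phi>: "DERIV \<phi> t :> pdiff [j,i] f (z + \<xi> *\<^sub>R ei + t *\<^sub>R ej)" if "0 \<le> t" "t \<le> h" for t
    unfolding P2 \<phi>_def ej_def by (rule line_deriv, fold ej_def, rule ex2, rule inU) (use that h \<xi> in auto)
  have "continuous_on {0..h} \<phi>"
    using d\<phi> by (intro continuous_at_imp_continuous_on ballI DERIV_isCont) auto
  moreover have "\<phi> differentiable (at t)" if "0 < t" "t < h" for t
    using d\<phi>[of t] that real_differentiable_def by force
  ultimately obtain l2 \<eta> where \<eta>: "0 < \<eta>" "\<eta> < h" "DERIV \<phi> \<eta> :> l2" "\<phi> h - \<phi> 0 = (h - 0) * l2"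
    using MVT[OF h, of \<phi>] by blast
  have l2: "l2 = pdiff [j,i] f (z + \<xi> *\<^sub>R ei + \<eta> *\<^sub>R ej)"
    using DERIV_unique[OF \<eta>(3) d\<phi>[of \<eta>]] \<eta> by simp
  define p where "p = z + \<xi> *\<^sub>R ei + \<eta> *\<^sub>R ej"
  have "dist p z = norm (\<xi> *\<^sub>R ei + \<eta> *\<^sub>R ej)" by (simp add: p_def dist_norm)
  also have "\<dots> \<le> 2 * h" using norm_two_axes[of \<xi> i \<eta> j] \<xi> \<eta> by (simp add: ei_def ej_def)
  finally have dp: "dist p z \<le> 2 * h" .
  have "g h - g 0 = h^2 * pdiff [j,i] f p"
    using \<xi>(4) l \<eta>(4) l2 unfolding \<phi>_def p_def by (simp add: power2_eq_square)
  then show ?thesis using dp unfolding g_def ei_def ej_def by (intro exI[of _ p]) (simp add: algebra_simps)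
qed

lemma tri3:
  fixes a b c :: real
  assumes "\<bar>a - b\<bar> < \<bar>b - c\<bar>/3" "\<bar>a - c\<bar> < \<bar>b - c\<bar>/3"
  shows False
proof -
  define X where "X = \<bar>b - c\<bar>"
  define Y where "Y = \<bar>a - b\<bar>"
  define Z where "Z = \<bar>a - c\<bar>"
  have "X \<le> Y + Z" "0 \<le> Y" "Y < X/3" "Z < X/3" using assms abs_triangle_ineq[of "b-a" "a-c"] by (auto simp: X_def Y_def Z_def abs_minus_commute)
  then show False by linarith
qed

lemma clairaut:
  fixes f :: "real^'i::finite \<Rightarrow> real"
  assumes C: "Ck_on 2 U f" and U: "open U" and z: "z \<in> U"
  shows "pdiff [j,i] f z = pdiff [i,j] f z"
proof (rule ccontr)
  assume ne: "pdiff [j,i] f z \<noteq> pdiff [i,j] f z"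
  define d where "d = \<bar>pdiff [j,i] f z - pdiff [i,j] f z\<bar>"
  have d: "d > 0" using ne by (simp add: d_def)
  have cA: "isCont (pdiff [j,i] f) z"
    using C U z unfolding Ck_on_def by (metis continuous_on_eq_continuous_at le_refl list.size(3,4) one_add_one add_0 add_Suc numeral_2_eq_2)
  have cB: "isCont (pdiff [i,j] f) z"
    using C U z unfolding Ck_on_def by (metis continuous_on_eq_continuous_at le_refl list.size(3,4) one_add_one add_0 add_Suc numeral_2_eq_2)
  obtain d1 where d1: "d1 > 0" "\<And>w. dist w z < d1 \<Longrightarrow> dist (pdiff [j,i] f w) (pdiff [j,i] f z) < d/3"
    using cA d unfolding continuous_at_eps_delta by (metis divide_pos_pos zero_less_numeral)
  obtain d2 where d2: "d2 > 0" "\<And>w. dist w z < d2 \<Longrightarrow> dist (pdiff [i,j] f w) (pdiff [i,j] f z) < d/3"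
    using cB d unfolding continuous_at_eps_delta by (metis divide_pos_pos zero_less_numeral)
  obtain r where r: "r > 0" "cball z r \<subseteq> U" using U z open_contains_cball by blast
  define h where "h = min d1 (min d2 r) / 3"
  have h: "h > 0" "2*h < d1" "2*h < d2" "2*h \<le> r" using d1 d2 r by (auto simp: h_def)
  have sub: "cball z (2*h) \<subseteq> U" using r h by auto
  obtain p where p: "dist p z \<le> 2*h"
    "f (z + h *\<^sub>R axis j 1 + h *\<^sub>R axis i 1) - f (z + h *\<^sub>R axis i 1) - f (z + h *\<^sub>R axis j 1) + f z
      = h^2 * pdiff [j,i] f p"
    using mixed_mvt[OF C h(1) sub, of j i] by blast
  obtain q where q: "dist q z \<le> 2*h"
    "f (z + h *\<^sub>R axis i 1 + h *\<^sub>R axis j 1) - f (z + h *\<^sub>R axis j 1) - f (z + h *\<^sub>R axis i 1) + f z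
      = h^2 * pdiff [i,j] f q"
    using mixed_mvt[OF C h(1) sub, of i j] by blast
  have e: "f (z + h *\<^sub>R axis j 1 + h *\<^sub>R axis i 1) = f (z + h *\<^sub>R axis i 1 + h *\<^sub>R axis j 1)"
    by (metis add.assoc add.commute)
  have "h^2 * pdiff [j,i] f p = h^2 * pdiff [i,j] f q" using p(2) q(2) e by linarith
  then have pq: "pdiff [j,i] f p = pdiff [i,j] f q" using h by (simp del: pdiff.simps)
  have "dist (pdiff [j,i] f p) (pdiff [j,i] f z) < d/3" using d1 p h by auto
  moreover have "dist (pdiff [i,j] f q) (pdiff [i,j] f z) < d/3" using d2 q h by auto
  ultimately have "d < d" using pq tri3[of "pdiff [i,j] f q" "pdiff [j,i] f z" "pdiff [i,j] f z"]
    unfolding d_def dist_real_def by (simp del: pdiff.simps)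
  then show False by simp
qed

lemma Ck_on_pdiff:
  assumes "Ck_on n U f" "length b \<le> n"
  shows "Ck_on (n - length b) U (pdiff b f)"
  unfolding Ck_on_def
proof (intro allI impI conjI ballI)
  fix \<gamma> :: "'a list" and z assume l: "length \<gamma> \<le> n - length b"
  then have l2: "length (\<gamma> @ b) \<le> n" using assms by simp
  show "z \<in> U \<Longrightarrow> pd_exists \<gamma> (pdiff b f) z"
    using assms(1) l2 unfolding Ck_on_def by (auto intro: pd_exists_append)
  show "continuous_on U (pdiff \<gamma> (pdiff b f))"
    using assms(1) l2 unfolding Ck_on_def pdiff_append[symmetric] by auto
qed

lemma Ck_on_mono: "Ck_on n U f \<Longrightarrow> m \<le> n \<Longrightarrow> Ck_on m U f"
  unfolding Ck_on_def by auto

lemma pdiff_cons_local: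
  assumes "open U" "z \<in> U" "\<And>w. w \<in> U \<Longrightarrow> pdiff \<gamma> f w = pdiff \<delta> f w"
  shows "pdiff (i # \<gamma>) f z = pdiff (i # \<delta>) f z"
proof -
  have "pdiff [i] (pdiff \<gamma> f) z = pdiff [i] (pdiff \<delta> f) z"
    using pdiff_local_open(1)[OF assms(1) _ assms(2), of "pdiff \<gamma> f" "pdiff \<delta> f"] assms(3) by blast
  then show ?thesis using pdiff_append[of "[i]" \<gamma> f] pdiff_append[of "[i]" \<delta> f] by (simp del: pdiff.simps)
qed

lemma pdiff_perm_aux:
  fixes f :: "real^'i::finite \<Rightarrow> real"
  assumes C: "Ck_on n U f" and U: "open U"
  shows "length \<gamma> = m \<Longrightarrow> m \<le> n \<Longrightarrow> mset \<gamma> = mset \<gamma>' \<Longrightarrow> z \<in> U \<Longrightarrow> pdiff \<gamma> f z = pdiff \<gamma>' f z"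
proof (induction m arbitrary: \<gamma> \<gamma>' z)
  case 0
  then show ?case by (simp del: pdiff.simps)
next
  case (Suc m)
  obtain i \<gamma>1 where g: "\<gamma> = i # \<gamma>1" using Suc.prems by (cases \<gamma>) auto
  obtain j \<delta> where g': "\<gamma>' = j # \<delta>" using Suc.prems g by (cases \<gamma>') auto
  have l1: "length \<gamma>1 = m" using Suc.prems g by (simp del: pdiff.simps)
  have mn: "m \<le> n" using Suc.prems(2) by simp
  have ld: "length \<delta> = m" using mset_eq_length[OF Suc.prems(3)] g g' l1 by (simp del: pdiff.simps)
  show ?case
  proof (cases "i = j")
    case True
    then have "mset \<gamma>1 = mset \<delta>" using Suc.prems(3) g g' by simp
    then have "\<And>w. w \<in> U \<Longrightarrow> pdiff \<gamma>1 f w = pdiff \<delta> f w" using Suc.IH[OF l1 mn] by blast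
    then have "pdiff (i # \<gamma>1) f z = pdiff (i # \<delta>) f z" by (rule pdiff_cons_local[OF U Suc.prems(4)])
    then show ?thesis using g g' True by simp
  next
    case False
    have iin: "i \<in> set \<delta>" using mset_eq_setD[OF Suc.prems(3)] g g' False
      by auto
    define \<delta>' where "\<delta>' = remove1 i \<delta>"
    have md: "mset \<delta> = mset (i # \<delta>')" using iin by (simp add: \<delta>'_def)
    have "mset \<gamma>1 = mset (j # \<delta>')"
      using Suc.prems(3) g g' md by (simp add: add_mset_commute)
    then have e1: "\<And>w. w \<in> U \<Longrightarrow> pdiff \<gamma>1 f w = pdiff (j # \<delta>') f w"
      using Suc.IH[OF l1, of "j # \<delta>'"] Suc.prems(2) by (simp del: pdiff.simps)
    have ld': "length \<delta>' = m - 1" "m \<ge> 1" using ld iin by (auto simp: \<delta>'_def length_remove1 Suc_le_eq length_pos_if_in_set)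
    have C2: "Ck_on 2 U (pdiff \<delta>' f)"
      using Ck_on_mono[OF Ck_on_pdiff[OF C, of \<delta>']] Suc.prems ld' by auto
    have "pdiff \<gamma> f z = pdiff (i # j # \<delta>') f z" using pdiff_cons_local[OF U Suc.prems(4) e1] g by (simp del: pdiff.simps)
    also have "\<dots> = pdiff [i,j] (pdiff \<delta>' f) z" using pdiff_append[of "[i,j]" \<delta>' f] by (simp del: pdiff.simps)
    also have "\<dots> = pdiff [j,i] (pdiff \<delta>' f) z" using clairaut[OF C2 U Suc.prems(4)] by (simp del: pdiff.simps)
    also have "\<dots> = pdiff (j # i # \<delta>') f z" using pdiff_append[of "[j,i]" \<delta>' f] by (simp del: pdiff.simps)
    also have "\<dots> = pdiff (j # \<delta>) f z"
    proof (rule pdiff_cons_local[OF U Suc.prems(4)])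
      fix w assume "w \<in> U"
      then show "pdiff (i # \<delta>') f w = pdiff \<delta> f w"
        using Suc.IH[of "i # \<delta>'" \<delta> w] md ld' Suc.prems(2) by (simp del: pdiff.simps)
    qed
    finally show ?thesis using g' by (simp del: pdiff.simps)
  qed
qed

lemma pdiff_perm:
  fixes f :: "real^'i::finite \<Rightarrow> real"
  assumes "Ck_on n U f" "open U" "length \<gamma> \<le> n" "mset \<gamma> = mset \<gamma>'" "z \<in> U"
  shows "pdiff \<gamma> f z = pdiff \<gamma>' f z"
  using pdiff_perm_aux[OF assms(1,2) refl assms(3-5)] .



definition argm :: "('a::real_inner \<Rightarrow> ereal) \<Rightarrow> 'a set \<Rightarrow> 'a \<Rightarrow> 'a set" where
  "argm F S u = {y \<in> S. \<forall>z\<in>S. ereal (z \<bullet> u) + F z \<le> ereal (y \<bullet> u) + F y}"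

definition Wv :: "('a::real_inner \<Rightarrow> ereal) \<Rightarrow> 'a set \<Rightarrow> 'a \<Rightarrow> real" where
  "Wv F S u = real_of_ereal (Sup {ereal (y \<bullet> u) + F y | y. y \<in> S})"

lemma env_value:
  fixes F :: "'a::real_inner \<Rightarrow> ereal"
  assumes noinf: "\<And>y. F y \<noteq> \<infinity>" and fin: "y1 \<in> S" "F y1 \<noteq> -\<infinity>"
    and am: "y0 \<in> argm F S u"
  shows "Wv F S u = y0 \<bullet> u + real_of_ereal (F y0)" "F y0 = ereal (real_of_ereal (F y0))"
    "Sup {ereal (y \<bullet> u) + F y | y. y \<in> S} = ereal (y0 \<bullet> u + real_of_ereal (F y0))"
proof -
  have y0: "y0 \<in> S" "\<And>z. z \<in> S \<Longrightarrow> ereal (z \<bullet> u) + F z \<le> ereal (y0 \<bullet> u) + F y0"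
    using am unfolding argm_def by auto
  have ninf: "F y0 \<noteq> -\<infinity>"
  proof
    assume "F y0 = -\<infinity>"
    then have "ereal (y1 \<bullet> u) + F y1 \<le> -\<infinity>" using y0(2)[OF fin(1)] by simp
    then show False using fin noinf[of y1] by (cases "F y1") auto
  qed
  then show e: "F y0 = ereal (real_of_ereal (F y0))" using noinf[of y0] by (cases "F y0") auto
  have S: "Sup {ereal (y \<bullet> u) + F y | y. y \<in> S} = ereal (y0 \<bullet> u) + F y0"
    by (rule Sup_eqI) (use y0 in auto)
  then show "Sup {ereal (y \<bullet> u) + F y | y. y \<in> S} = ereal (y0 \<bullet> u + real_of_ereal (F y0))"
    using e by (metis plus_ereal.simps(1))
  then show "Wv F S u = y0 \<bullet> u + real_of_ereal (F y0)" unfolding Wv_def by simp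
qed

lemma env_subgrad:
  fixes F :: "'a::real_inner \<Rightarrow> ereal"
  assumes noinf: "\<And>y. F y \<noteq> \<infinity>" and fin: "y1 \<in> S" "F y1 \<noteq> -\<infinity>"
    and am: "y0 \<in> argm F S u" and am': "y0' \<in> argm F S u'"
  shows "Wv F S u' \<ge> Wv F S u + y0 \<bullet> (u' - u)"
proof -
  have y0: "y0 \<in> S" using am unfolding argm_def by auto
  note e = env_value[OF noinf fin am]
  note e' = env_value[OF noinf fin am']
  have "ereal (y0 \<bullet> u') + F y0 \<le> Sup {ereal (y \<bullet> u') + F y | y. y \<in> S}"
    by (rule Sup_upper) (use y0 in auto)
  then have "ereal (y0 \<bullet> u' + real_of_ereal (F y0)) \<le> ereal (Wv F S u')"
    using e(2) e'(1,3) by (metis plus_ereal.simps(1))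
  then show ?thesis using e(1) by (simp add: inner_diff_right)
qed

lemma env_deriv:
  fixes F :: "real^'k::finite \<Rightarrow> ereal"
  assumes noinf: "\<And>y. F y \<noteq> \<infinity>" and fin: "y1 \<in> S" "F y1 \<noteq> -\<infinity>"
    and allam: "\<And>v. \<exists>y. y \<in> argm F S v"
    and am: "y0 \<in> argm F S u"
    and dif: "(\<lambda>t. Wv F S (u + t *\<^sub>R axis k 1)) differentiable (at 0)"
  shows "deriv (\<lambda>t. Wv F S (u + t *\<^sub>R axis k 1)) 0 = y0 $ k"
proof -
  define D where "D = deriv (\<lambda>t. Wv F S (u + t *\<^sub>R axis k 1)) 0"
  define \<phi> where "\<phi> t = Wv F S (u + t *\<^sub>R axis k 1) - Wv F S u - t * y0 $ k" for t
  have dW: "DERIV (\<lambda>t. Wv F S (u + t *\<^sub>R axis k 1)) 0 :> D"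
    using dif DERIV_deriv_iff_real_differentiable D_def by blast
  have "DERIV \<phi> 0 :> D - y0 $ k"
    unfolding \<phi>_def by (intro derivative_eq_intros dW) (auto intro: dW)
  moreover have "\<forall>y. \<bar>0 - y\<bar> < 1 \<longrightarrow> \<phi> 0 \<le> \<phi> y"
  proof (intro allI impI)
    fix t :: real
    obtain y' where "y' \<in> argm F S (u + t *\<^sub>R axis k 1)" using allam by blast
    from env_subgrad[OF noinf fin am this] have "\<phi> t \<ge> 0"
      by (simp add: \<phi>_def inner_axis mult.commute)
    then show "\<phi> 0 \<le> \<phi> t" by (simp add: \<phi>_def)
  qed
  ultimately have "D - y0 $ k = 0" by (meson DERIV_local_min zero_less_one)
  then show ?thesis by (simp add: D_def)
qed

lemma env_convex2:
  fixes F :: "real^'k::finite \<Rightarrow> ereal"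
  assumes noinf: "\<And>y. F y \<noteq> \<infinity>" and fin: "y1 \<in> S" "F y1 \<noteq> -\<infinity>"
    and allam: "\<And>v. \<exists>y. y \<in> argm F S v"
    and U: "open U" "u \<in> U"
    and ex1: "\<And>w. w \<in> U \<Longrightarrow> (\<lambda>t. Wv F S (w + t *\<^sub>R axis k 1)) differentiable (at 0)"
    and ex2: "(\<lambda>t. pdiff [k] (Wv F S) (u + t *\<^sub>R axis k 1)) differentiable (at 0)"
  shows "pdiff [k,k] (Wv F S) u \<ge> 0"
proof -
  define ys where "ys v = (SOME y. y \<in> argm F S v)" for v
  have ys: "ys v \<in> argm F S v" for v unfolding ys_def using allam by (metis someI_ex)
  define g where "g t = pdiff [k] (Wv F S) (u + t *\<^sub>R axis k 1)" for t
  have gval: "g t = ys (u + t *\<^sub>R axis k 1) $ k" if "u + t *\<^sub>R axis k 1 \<in> U" for t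
    using env_deriv[OF noinf fin allam ys ex1[OF that]] by (simp add: g_def)
  have mono: "t * (g t - g 0) \<ge> 0" if "u + t *\<^sub>R axis k 1 \<in> U" for t
  proof -
    define a where "a = u + t *\<^sub>R axis k 1"
    have 1: "Wv F S u \<ge> Wv F S a + ys a \<bullet> (u - a)" by (rule env_subgrad[OF noinf fin ys ys])
    have 2: "Wv F S a \<ge> Wv F S u + ys u \<bullet> (a - u)" by (rule env_subgrad[OF noinf fin ys ys])
    have "0 \<le> t * (ys a $ k - ys u $ k)"
      using 1 2 by (simp add: a_def inner_axis algebra_simps)
    then show ?thesis using gval[OF that] gval[of 0] U by (simp add: a_def)
  qed
  have dg: "DERIV g 0 :> pdiff [k,k] (Wv F S) u"
  proof -
    have "pdiff [k,k] (Wv F S) u = deriv g 0" unfolding g_def by (simp only: pdiff.simps(2))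
    then show ?thesis using ex2 DERIV_deriv_iff_real_differentiable unfolding g_def by metis
  qed
  then have lim: "((\<lambda>y. (g y - g 0) / (y - 0)) \<longlongrightarrow> pdiff [k,k] (Wv F S) u) (at 0)"
    using has_field_derivative_iff by blast
  have "eventually (\<lambda>t::real. u + t *\<^sub>R axis k 1 \<in> U) (nhds 0)"
    using line_tendsto[of u k] U unfolding tendsto_def by blast
  then have "eventually (\<lambda>t. 0 \<le> (g t - g 0) / (t - 0)) (at 0)"
    unfolding eventually_at_filter
  proof (rule eventually_mono, intro impI)
    fix t :: real assume "u + t *\<^sub>R axis k 1 \<in> U" "t \<noteq> 0"
    with mono[of t] show "0 \<le> (g t - g 0) / (t - 0)"
      by (cases "t > 0") (auto simp: zero_le_mult_iff zero_le_divide_iff)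
  qed
  then show ?thesis using tendsto_lowerbound[OF lim] by simp
qed

lemma deriv_right_unique:
  fixes h1 h2 :: "real \<Rightarrow> real"
  assumes d1: "h1 differentiable (at 0)" and d2: "h2 differentiable (at 0)"
    and ev: "eventually (\<lambda>t. 0 \<le> t \<longrightarrow> h1 t = h2 t) (nhds 0)"
  shows "deriv h1 0 = deriv h2 0"
proof -
  have D1: "(h1 has_field_derivative deriv h1 0) (at 0 within {0<..})"
    using d1 DERIV_deriv_iff_real_differentiable has_field_derivative_at_within by blast
  have D2: "(h2 has_field_derivative deriv h2 0) (at 0 within {0<..})"
    using d2 DERIV_deriv_iff_real_differentiable has_field_derivative_at_within by blast
  have l1: "((\<lambda>y. (h1 y - h1 0) / (y - 0)) \<longlongrightarrow> deriv h1 0) (at_right 0)"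
    using D1 has_field_derivative_iff by blast
  have l2: "((\<lambda>y. (h2 y - h2 0) / (y - 0)) \<longlongrightarrow> deriv h2 0) (at_right 0)"
    using D2 has_field_derivative_iff by blast
  have h0: "h1 0 = h2 0" using eventually_nhds_x_imp_x[OF ev] by simp
  have "eventually (\<lambda>y. (h1 y - h1 0) / (y - 0) = (h2 y - h2 0) / (y - 0)) (at_right 0)"
    using ev unfolding eventually_at_filter by (rule eventually_mono) (auto simp: h0)
  then have "((\<lambda>y. (h2 y - h2 0) / (y - 0)) \<longlongrightarrow> deriv h1 0) (at_right 0)"
    using l1 by (subst (asm) tendsto_cong) auto
  from tendsto_unique[OF _ this l2] show ?thesis by simp
qed

lemma pdiff_orthant:
  fixes f g :: "real^'i::finite \<Rightarrow> real"
  assumes W: "open W" and eq: "\<And>x. x \<in> W \<Longrightarrow> (\<forall>r. 0 \<le> x$r) \<Longrightarrow> f x = g x"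
  shows "z \<in> W \<Longrightarrow> (\<forall>r. 0 \<le> z$r) \<Longrightarrow> pd_exists \<gamma> f z \<Longrightarrow> pd_exists \<gamma> g z \<Longrightarrow> pdiff \<gamma> f z = pdiff \<gamma> g z"
proof (induction \<gamma> arbitrary: z)
  case Nil
  then show ?case using eq by simp
next
  case (Cons i \<gamma>)
  have "eventually (\<lambda>w. w \<in> W) (nhds z)" using W Cons.prems(1) eventually_nhds by blast
  moreover have "eventually (pd_exists \<gamma> f) (nhds z)" "eventually (pd_exists \<gamma> g) (nhds z)"
    using Cons.prems(3,4) by auto
  ultimately have "eventually (\<lambda>w. w \<in> W \<and> pd_exists \<gamma> f w \<and> pd_exists \<gamma> g w) (nhds z)"
    by eventually_elim auto
  from ev_line[OF this, of i]
  have ev: "eventually (\<lambda>t. 0 \<le> t \<longrightarrow> pdiff \<gamma> f (z + t *\<^sub>R axis i 1) = pdiff \<gamma> g (z + t *\<^sub>R axis i 1)) (nhds 0)"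
  proof (rule eventually_mono, intro impI)
    fix t :: real
    assume a: "z + t *\<^sub>R axis i 1 \<in> W \<and> pd_exists \<gamma> f (z + t *\<^sub>R axis i 1) \<and> pd_exists \<gamma> g (z + t *\<^sub>R axis i 1)"
      and t: "0 \<le> t"
    have "\<forall>r. 0 \<le> (z + t *\<^sub>R axis i 1)$r" using Cons.prems(2) t by (auto simp: axis_def)
    then show "pdiff \<gamma> f (z + t *\<^sub>R axis i 1) = pdiff \<gamma> g (z + t *\<^sub>R axis i 1)"
      using Cons.IH a by blast
  qed
  have "deriv (\<lambda>t. pdiff \<gamma> f (z + t *\<^sub>R axis i 1)) 0 = deriv (\<lambda>t. pdiff \<gamma> g (z + t *\<^sub>R axis i 1)) 0"
    by (rule deriv_right_unique[OF _ _ ev]) (use Cons.prems(3,4) in auto)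
  then show ?case by simp
qed



lemma Ybar_obs:
  assumes "prob_space \<nu>" "prob_space \<mu>" "integrable (\<nu> \<Otimes>\<^sub>M \<mu>) (\<lambda>z. Y x (fst z) (snd z))"
  shows "(\<integral>\<beta>. Ybar_xb \<mu> Y x \<beta> $ k \<partial>\<nu>) = Ybar \<nu> \<mu> Y x $ k"
proof -
  interpret pair_prob_space \<nu> \<mu>
    using assms by (simp add: pair_prob_space_def pair_sigma_finite_def prob_space_imp_sigma_finite)
  have i: "integrable \<nu> (\<lambda>\<beta>. \<integral>\<epsilon>. (\<lambda>z. Y x (fst z) (snd z)) (\<beta>, \<epsilon>) \<partial>\<mu>)"
    by (rule integrable_fst'[OF assms(3)])
  have e: "(\<integral>\<beta>. (\<integral>\<epsilon>. (\<lambda>z. Y x (fst z) (snd z)) (\<beta>, \<epsilon>) \<partial>\<mu>) \<partial>\<nu>) = Ybar \<nu> \<mu> Y x"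
    unfolding Ybar_def by (rule integral_fst'[OF assms(3)])
  have "(\<integral>\<beta>. Ybar_xb \<mu> Y x \<beta> $ k \<partial>\<nu>) = (\<integral>\<beta>. Ybar_xb \<mu> Y x \<beta> \<partial>\<nu>) $ k"
    using integral_bounded_linear[OF bounded_linear_vec_nth[of k] i] by (simp add: Ybar_xb_def)
  also have "\<dots> = Ybar \<nu> \<mu> Y x $ k" using e by (simp add: Ybar_xb_def)
  finally show ?thesis .
qed

lemma cont_prodlist: "continuous_on UNIV (\<lambda>z::real^'r::finite. prod_list (map (\<lambda>r. z$r) rs))"
  by (induction rs) (auto intro!: continuous_intros)

lemma indep_moment:
  fixes \<nu> :: "(real^'r::finite) measure"
  assumes f: "assm_f r1 \<nu>" and ps: "prob_space \<nu>" and sb: "sets \<nu> = sets borel"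
    and r1: "r1 \<notin> set rs" and int: "moment_exists \<nu> rs"
  shows "moment \<nu> (r1 # rs) = (\<integral>\<beta>. \<beta>$r1 \<partial>\<nu>) * moment \<nu> rs"
proof -
  interpret prob_space \<nu> by (rule ps)
  define E where "E = (\<lambda>t::real. (\<chi> r. if r = r1 then t else 0) :: real^'r)"
  define X where "X = (\<lambda>\<beta>::real^'r. E (\<beta>$r1))"
  define P where "P = (\<lambda>\<beta>::real^'r. (\<chi> r. if r = r1 then 0 else \<beta>$r) :: real^'r)"
  define Yf where "Yf = (\<lambda>z::real^'r. prod_list (map (\<lambda>r. z$r) rs))"
  have mE: "E \<in> borel_measurable borel" unfolding E_def
    apply (intro borel_measurable_continuous_onI continuous_on_vec_lambda)
    subgoal for r by (cases "r = r1") (auto intro!: continuous_intros)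
    done
  have mX: "X \<in> borel_measurable borel" unfolding X_def E_def
    apply (intro borel_measurable_continuous_onI continuous_on_vec_lambda)
    subgoal for r by (cases "r = r1") (auto intro!: continuous_intros)
    done
  have mP: "P \<in> borel_measurable borel" unfolding P_def
    apply (intro borel_measurable_continuous_onI continuous_on_vec_lambda)
    subgoal for r by (cases "r = r1") (auto intro!: continuous_intros)
    done
  have mY: "Yf \<in> borel_measurable borel" unfolding Yf_def
    by (intro borel_measurable_continuous_onI cont_prodlist)
  have mX': "X \<in> borel_measurable \<nu>" using mX measurable_cong_sets[OF sb refl] by blast
  have mP': "P \<in> borel_measurable \<nu>" using mP measurable_cong_sets[OF sb refl] by blast
  have ind: "indep_var borel X borel P"
    unfolding indep_var_def indep_vars_def2
  proof (intro conjI ballI)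
    fix i :: bool
    show "random_variable (case_bool borel borel i) (case_bool X P i)"
      using mX' mP' by (cases i) auto
  next
    have e: "(\<lambda>i. {case_bool X P i -` A \<inter> space \<nu> |A. A \<in> sets (case_bool borel borel i)})
      = case_bool {X -` A \<inter> space \<nu> |A. A \<in> sets borel} {P -` A \<inter> space \<nu> |A. A \<in> sets borel}"
      by (rule ext) (simp split: bool.split)
    have "indep_set {X -` A \<inter> space \<nu> |A. A \<in> sets borel} {P -` A \<inter> space \<nu> |A. A \<in> sets borel}"
    proof (rule indep_setI)
      show "{X -` A \<inter> space \<nu> |A. A \<in> sets borel} \<subseteq> events"
        using mX' by (auto simp: measurable_def)
      show "{P -` A \<inter> space \<nu> |A. A \<in> sets borel} \<subseteq> events"
        using mP' by (auto simp: measurable_def)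
    next
      fix a b assume "a \<in> {X -` A \<inter> space \<nu> |A. A \<in> sets borel}" "b \<in> {P -` A \<inter> space \<nu> |A. A \<in> sets borel}"
      then obtain A C where A: "A \<in> sets (borel :: (real^'r) measure)" "a = X -` A \<inter> space \<nu>"
        and C: "C \<in> sets (borel :: (real^'r) measure)" "b = P -` C \<inter> space \<nu>" by blast
      define A' where "A' = E -` A"
      have A': "A' \<in> sets (borel :: real measure)"
        using measurable_sets[OF mE A(1)] by (simp add: A'_def)
      have "a \<inter> b = {\<beta>\<in>space \<nu>. \<beta>$r1 \<in> A' \<and> (\<chi> r. if r = r1 then 0 else \<beta>$r) \<in> C}"
        using A C by (auto simp: X_def P_def A'_def)
      moreover have "a = {\<beta>\<in>space \<nu>. \<beta>$r1 \<in> A'}" using A by (auto simp: X_def A'_def)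
      moreover have "b = {\<beta>\<in>space \<nu>. (\<chi> r. if r = r1 then 0 else \<beta>$r) \<in> C}" using C by (auto simp: P_def)
      ultimately show "prob (a \<inter> b) = prob a * prob b"
        using f A' C(1) unfolding assm_f_def by simp
    qed
    then show "indep_sets (\<lambda>i. {case_bool X P i -` A \<inter> space \<nu> |A. A \<in> sets (case_bool borel borel i)}) UNIV"
      unfolding e indep_set_def .
  qed
  have mX1: "(\<lambda>v::real^'r. v$r1) \<in> borel_measurable borel"
    by (intro borel_measurable_continuous_onI continuous_intros)
  have ind2: "indep_var borel ((\<lambda>v. v$r1) \<circ> X) borel (Yf \<circ> P)"
    by (rule indep_var_compose[OF ind mX1 mY])
  have eX: "((\<lambda>v. v$r1) \<circ> X) = (\<lambda>\<beta>. \<beta>$r1)" by (auto simp: X_def E_def)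
  have eYP: "(Yf \<circ> P) = (\<lambda>\<beta>. prod_list (map (\<lambda>r. \<beta>$r) rs))"
    unfolding Yf_def P_def o_def using r1 by (intro ext arg_cong[where f=prod_list] map_cong) auto
  have iX: "integrable \<nu> ((\<lambda>v. v$r1) \<circ> X)" using f unfolding assm_f_def eX by simp
  have iY: "integrable \<nu> (Yf \<circ> P)" using int unfolding moment_exists_def eYP .
  have "(\<integral>\<beta>. ((\<lambda>v. v$r1) \<circ> X) \<beta> * (Yf \<circ> P) \<beta> \<partial>\<nu>) = (\<integral>\<beta>. ((\<lambda>v. v$r1) \<circ> X) \<beta> \<partial>\<nu>) * (\<integral>\<beta>. (Yf \<circ> P) \<beta> \<partial>\<nu>)"
    by (rule indep_var_lebesgue_integral[OF ind2 iX iY])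
  then show ?thesis unfolding moment_def eYP eX by simp
qed



lemma idx_surj:
  fixes good :: "'r::finite \<Rightarrow> 'k::finite"
  assumes surj: "\<And>k. \<exists>r. good r = k"
  shows "\<exists>x \<beta>. idx good x \<beta> = u"
proof -
  define rep where "rep k = (SOME r. good r = k)" for k
  have rep: "good (rep k) = k" for k unfolding rep_def by (rule someI_ex[OF surj])
  define x where "x = ((\<chi> r. (1::real)) :: real^'r)"
  define \<beta> where "\<beta> = ((\<chi> r. if r = rep (good r) then u $ good r else 0) :: real^'r)"
  have "idx good x \<beta> $ k = u $ k" for k
  proof -
    have "idx good x \<beta> $ k = (\<Sum>r\<in>{r. good r = k}. if r = rep k then u $ k else 0)"
      unfolding idx_def x_def \<beta>_def by (auto intro!: sum.cong)
    also have "\<dots> = u $ k" using rep[of k] by (simp add: sum.delta)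
    finally show ?thesis .
  qed
  then have "idx good x \<beta> = u" by (simp add: vec_eq_iff)
  then show ?thesis by blast
qed

lemma Vfun_Wv: "Vfun \<mu> B D = Wv (Dbar \<mu> B D) (Bbar B)"
  unfolding Vfun_def Wv_def by (rule ext) simp

lemma model_H:
  fixes good :: "'r::finite \<Rightarrow> 'k::finite"
    and \<nu> :: "(real^'r) measure" and \<mu> :: "'e measure"
    and Y :: "real^'r \<Rightarrow> real^'r \<Rightarrow> 'e \<Rightarrow> real^'k"
  assumes MA: "model_assumptions good r1 Mbar \<nu> \<mu> B D Y" and M: "1 \<le> M" "enat M \<le> Mbar"
  shows "\<And>rs k. length rs = M \<Longrightarrow> pdiff rs (\<lambda>x. \<integral>\<beta>. Ybar_xb \<mu> Y x \<beta> $ k \<partial>\<nu>) 0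
            = moment \<nu> rs * pdiff (map good rs @ [k]) (Vfun \<mu> B D) 0"
    and "\<And>ks ks'. length ks = Suc M \<Longrightarrow> mset ks = mset ks' \<Longrightarrow> pdiff ks (Vfun \<mu> B D) 0 = pdiff ks' (Vfun \<mu> B D) 0"
    and "\<And>k. pdiff [k,k] (Vfun \<mu> B D) 0 \<ge> 0"
proof -
  have oc: "optimal_choices good B D Y" and aa: "assm_a \<nu> \<mu> Y" and ab: "assm_b good \<mu> B D Y"
    and dM: "assm_d M \<nu> \<mu> B D Y" and eM: "assm_e M good \<nu>"
    using MA M unfolding model_assumptions_def by auto
  have "enat 1 \<le> enat M" using M(1) by simp
  then have "enat 1 \<le> Mbar" using M(2) by (rule order_trans)
  then have e1: "assm_e 1 good \<nu>" using MA unfolding model_assumptions_def by auto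
  have surj: "\<exists>r. good r = k" for k
  proof -
    obtain rs where "map good rs = [k]" using e1[unfolded assm_e_def, rule_format, of "[k]"] by (metis One_nat_def length_Cons list.size(3))
    then show ?thesis by (auto simp: map_eq_Cons_conv)
  qed
  define F where "F = Dbar \<mu> B D"
  define S where "S = Bbar B"
  define V where "V = Vfun \<mu> B D"
  have VW: "V = Wv F S" unfolding V_def F_def S_def by (rule Vfun_Wv)
  have noinf: "\<And>y. F y \<noteq> \<infinity>" using ab unfolding assm_b_def F_def by auto
  obtain y1 where fin: "y1 \<in> S" "F y1 \<noteq> -\<infinity>" using ab unfolding assm_b_def F_def S_def by auto
  have amY: "Ybar_xb \<mu> Y x \<beta> \<in> argm F S (idx good x \<beta>)" for x \<beta>
    using ab unfolding assm_b_def argm_def F_def S_def by blast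
  have allam: "\<exists>y. y \<in> argm F S v" for v
    using idx_surj[OF surj, of v] amY by blast
  obtain U where U: "open U" "0 \<in> U" "Ck_on (Suc M) U V" using dM unfolding assm_d_def V_def by auto
  have pe: "\<And>\<gamma> w. length \<gamma> \<le> Suc M \<Longrightarrow> w \<in> U \<Longrightarrow> pd_exists \<gamma> V w"
    using U(3) unfolding Ck_on_def by blast
  have d1: "(\<lambda>t. V (w + t *\<^sub>R axis k 1)) differentiable (at 0)" if "w \<in> U" for w k
    using pe[of "[k]" w] that by simp
  have dY: "Ybar_xb \<mu> Y x \<beta> $ k = pdiff [k] V (idx good x \<beta>)" if "idx good x \<beta> \<in> U" for x \<beta> k
    using env_deriv[OF noinf fin allam amY d1[OF that, unfolded VW]] by (simp add: VW)
  have chain: "pdiff \<gamma> (\<lambda>x. Ybar_xb \<mu> Y x \<beta> $ k) 0 = prod_list (map (\<lambda>r. \<beta>$r) \<gamma>) * pdiff (map good \<gamma> @ [k]) V 0"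
    if "length \<gamma> \<le> M" for \<gamma> \<beta> k
  proof -
    have "eventually (\<lambda>x. idx good x \<beta> \<in> U) (nhds 0)"
      using idx_tendsto[of good \<beta> 0] U(1,2) unfolding tendsto_def by simp
    then have X: "eventually (\<lambda>x. Ybar_xb \<mu> Y x \<beta> $ k = pdiff [k] V (idx good x \<beta>)) (nhds 0)"
      by (rule eventually_mono) (rule dY)
    have "pdiff \<gamma> (\<lambda>x. Ybar_xb \<mu> Y x \<beta> $ k) 0 = pdiff \<gamma> (\<lambda>x. pdiff [k] V (idx good x \<beta>)) 0"
      by (rule conjunct1[OF pdiff_local[OF X]])
    also have "\<dots> = prod_list (map (\<lambda>r. \<beta>$r) \<gamma>) * pdiff (map good \<gamma>) (pdiff [k] V) (idx good 0 \<beta>)"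
    proof (rule pdiff_chain[OF U(1), of M])
      fix \<gamma>' :: "'k list" and w assume "length \<gamma>' \<le> M" "w \<in> U"
      then have "pd_exists (\<gamma>' @ [k]) V w" using pe[of "\<gamma>' @ [k]" w] by (simp del: pdiff.simps pd_exists.simps)
      then show "pd_exists \<gamma>' (pdiff [k] V) w" by (rule pd_exists_append)
    qed (use that U(2) in simp_all)
    also have "\<dots> = prod_list (map (\<lambda>r. \<beta>$r) \<gamma>) * pdiff (map good \<gamma> @ [k]) V 0"
      by (simp add: pdiff_append del: pdiff.simps)
    finally show ?thesis .
  qed
  show "pdiff rs (\<lambda>x. \<integral>\<beta>. Ybar_xb \<mu> Y x \<beta> $ k \<partial>\<nu>) 0
            = moment \<nu> rs * pdiff (map good rs @ [k]) (Vfun \<mu> B D) 0" if "length rs = M" for rs k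
  proof -
    have "pdiff rs (\<lambda>x. \<integral>\<beta>. Ybar_xb \<mu> Y x \<beta> $ k \<partial>\<nu>) 0 = (\<integral>\<beta>. pdiff rs (\<lambda>x. Ybar_xb \<mu> Y x \<beta> $ k) 0 \<partial>\<nu>)"
      using dM that unfolding assm_d_def by blast
    also have "\<dots> = (\<integral>\<beta>. prod_list (map (\<lambda>r. \<beta>$r) rs) * pdiff (map good rs @ [k]) V 0 \<partial>\<nu>)"
      using chain[of rs] that by (simp del: pdiff.simps)
    also have "\<dots> = moment \<nu> rs * pdiff (map good rs @ [k]) V 0"
      unfolding moment_def by (rule integral_mult_left_zero)
    finally show ?thesis by (simp add: V_def)
  qed
  show "pdiff ks (Vfun \<mu> B D) 0 = pdiff ks' (Vfun \<mu> B D) 0" if "length ks = Suc M" "mset ks = mset ks'" for ks ks'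
    using pdiff_perm[OF U(3) U(1) _ that(2) U(2)] that(1) by (simp add: V_def del: pdiff.simps)
  show "pdiff [k,k] (Vfun \<mu> B D) 0 \<ge> 0" for k
  proof -
    have "(\<lambda>t. pdiff [k] (Wv F S) (0 + t *\<^sub>R axis k 1)) differentiable (at 0)"
      using pe[of "[k,k]" 0] M U(2) by (simp add: VW del: pdiff.simps)
    moreover have "\<And>w. w \<in> U \<Longrightarrow> (\<lambda>t. Wv F S (w + t *\<^sub>R axis k 1)) differentiable (at 0)"
      using d1 unfolding VW .
    ultimately have "pdiff [k,k] (Wv F S) 0 \<ge> 0"
      using env_convex2[OF noinf fin allam U(1,2)] by blast
    then show ?thesis unfolding VW[symmetric] V_def .
  qed
qed



lemma replicate_step:
  assumes "n < length ks"
  shows "(replicate n k0 @ drop n ks)[n := k0] = replicate (Suc n) k0 @ drop (Suc n) ks"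
proof -
  have d: "drop n ks = ks ! n # drop (Suc n) ks" using assms by (rule Cons_nth_drop_Suc[symmetric])
  have "(replicate n k0 @ drop n ks)[n := k0] = replicate n k0 @ (drop n ks)[0 := k0]"
    by (simp add: list_update_append)
  also have "\<dots> = replicate n k0 @ k0 # drop (Suc n) ks" using d by simp
  also have "\<dots> = replicate (Suc n) k0 @ drop (Suc n) ks" by (simp add: replicate_app_Cons_same)
  finally show ?thesis .
qed

lemma ratio_lemma:
  fixes c1 c2 :: "'k list \<Rightarrow> real" and m1 m2 :: "'r list \<Rightarrow> real" and good :: "'r \<Rightarrow> 'k"
  assumes H: "\<And>rs k. length rs = M \<Longrightarrow> m1 rs * c1 (map good rs @ [k]) = m2 rs * c2 (map good rs @ [k])"
    and nz: "\<And>ks. length ks = Suc M \<Longrightarrow> c2 ks \<noteq> 0"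
    and ex: "\<And>ks. length ks = M \<Longrightarrow> \<exists>rs. map good rs = ks \<and> m1 rs \<noteq> 0"
    and p1: "\<And>ks ks'. length ks = Suc M \<Longrightarrow> mset ks = mset ks' \<Longrightarrow> c1 ks = c1 ks'"
    and p2: "\<And>ks ks'. length ks = Suc M \<Longrightarrow> mset ks = mset ks' \<Longrightarrow> c2 ks = c2 ks'"
  shows "\<exists>lm. (\<forall>rs. length rs = M \<longrightarrow> m2 rs = lm * m1 rs) \<and> (\<forall>ks. length ks = Suc M \<longrightarrow> c1 ks = lm * c2 ks)"
proof -
  define R where "R ks = (SOME rs. map good rs = ks \<and> m1 rs \<noteq> 0)" for ks
  have R: "map good (R ks) = ks" "m1 (R ks) \<noteq> 0" if "length ks = M" for ks
    using someI_ex[OF ex[OF that]] unfolding R_def by blast+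
  define lam where "lam ks = m2 (R ks) / m1 (R ks)" for ks
  have i: "c1 (ks @ [k]) = lam ks * c2 (ks @ [k])" if "length ks = M" for ks k
  proof -
    have "m1 (R ks) * c1 (ks @ [k]) = m2 (R ks) * c2 (ks @ [k])"
      using H[of "R ks" k] R[OF that] that by (metis length_map)
    then show ?thesis using R(2)[OF that] unfolding lam_def by (simp add: field_simps)
  qed
  have ii: "m2 rs = lam (map good rs) * m1 rs" if "length rs = M" for rs
  proof -
    have l: "length (map good rs) = M" using that by simp
    have "m1 rs * (lam (map good rs) * c2 (map good rs @ [undefined])) = m2 rs * c2 (map good rs @ [undefined])"
      using H[OF that, of undefined] i[OF l] by simp
    moreover have "c2 (map good rs @ [undefined]) \<noteq> 0" using nz l by simp
    ultimately show ?thesis by (simp add: algebra_simps)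
  qed
  have iii: "lam ks = lam (ks[j := a])" if "length ks = M" "j < M" for ks j a
  proof -
    have l2: "length (ks[j := a]) = M" using that by simp
    have ms: "mset (ks @ [a]) = mset (ks[j := a] @ [ks ! j])"
      using that by (simp add: mset_update insert_DiffM)
    have "c1 (ks @ [a]) = c1 (ks[j := a] @ [ks ! j])" by (rule p1) (use that ms in auto)
    moreover have "c2 (ks @ [a]) = c2 (ks[j := a] @ [ks ! j])" by (rule p2) (use that ms in auto)
    moreover have "c2 (ks @ [a]) \<noteq> 0" using nz that by simp
    ultimately show ?thesis using i[OF that(1), of a] i[OF l2, of "ks ! j"] by simp
  qed
  have iv: "n \<le> M \<Longrightarrow> lam ks = lam (replicate n undefined @ drop n ks)" if "length ks = M" for ks n
  proof (induction n)
    case 0 then show ?case by simp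
  next
    case (Suc n)
    have l: "length (replicate n undefined @ drop n ks) = M" using Suc.prems that by simp
    have "lam ks = lam (replicate n undefined @ drop n ks)" using Suc by simp
    also have "\<dots> = lam ((replicate n undefined @ drop n ks)[n := undefined])"
      by (rule iii[OF l]) (use Suc.prems in simp)
    also have "\<dots> = lam (replicate (Suc n) undefined @ drop (Suc n) ks)"
      using replicate_step[of n ks undefined] Suc.prems that by simp
    finally show ?case .
  qed
  define L where "L = lam (replicate M undefined)"
  have cst: "lam ks = L" if "length ks = M" for ks
    using iv[OF that, of M] that by (simp add: L_def)
  show ?thesis
  proof (intro exI[of _ L] conjI allI impI)
    fix rs :: "'r list" assume "length rs = M" then show "m2 rs = L * m1 rs" using ii cst by simp
  next
    fix ks :: "'k list" assume l: "length ks = Suc M"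
    then have ks: "ks = butlast ks @ [last ks]" by (metis append_butlast_last_id list.size(3) nat.simps(3))
    have "length (butlast ks) = M" using l by simp
    then show "c1 ks = L * c2 ks" using i[of "butlast ks" "last ks"] cst ks by metis
  qed
qed



theorem proposition1:
  fixes good :: "'r::finite \<Rightarrow> 'k::finite" and r1 :: 'r and Mbar :: enat
    and \<nu> \<nu>' :: "(real^'r) measure"
    and \<mu> :: "'e measure" and \<mu>' :: "'f measure"
    and B B' :: "(real^'k) set"
    and D :: "real^'k \<Rightarrow> 'e \<Rightarrow> ereal" and D' :: "real^'k \<Rightarrow> 'f \<Rightarrow> ereal"
    and Y :: "real^'r \<Rightarrow> real^'r \<Rightarrow> 'e \<Rightarrow> real^'k"
    and Y' :: "real^'r \<Rightarrow> real^'r \<Rightarrow> 'f \<Rightarrow> real^'k"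
  assumes model1: "model_assumptions good r1 Mbar \<nu> \<mu> B D Y"
    and model2: "model_assumptions good r1 Mbar \<nu>' \<mu>' B' D' Y'"
    and K1: "CARD('k) = 1 \<Longrightarrow> K1_condition r1 Mbar \<nu> \<and> K1_condition r1 Mbar \<nu>'"
    and scale: "\<bar>\<integral>\<beta>. \<beta>$r1 \<partial>\<nu>\<bar> = \<bar>\<integral>\<beta>. \<beta>$r1 \<partial>\<nu>'\<bar>"
    and observed: "\<exists>U. open U \<and> 0 \<in> U \<and>
                     (\<forall>x\<in>U. (\<forall>r. 0 \<le> x$r) \<longrightarrow> Ybar \<nu> \<mu> Y x = Ybar \<nu>' \<mu>' Y' x)"
  shows "\<forall>M::nat. 1 \<le> M \<and> enat M \<le> Mbar \<longrightarrow>
           (\<forall>rs::'r list. length rs = M \<longrightarrow> moment \<nu> rs = moment \<nu>' rs) \<and>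
           (\<forall>\<gamma>::'k list. length \<gamma> = Suc M \<longrightarrow>
               pdiff \<gamma> (Vfun \<mu> B D) 0 = pdiff \<gamma> (Vfun \<mu>' B' D') 0)"
proof -
  define c1 where "c1 = (\<lambda>ks. pdiff ks (Vfun \<mu> B D) 0)"
  define c2 where "c2 = (\<lambda>ks. pdiff ks (Vfun \<mu>' B' D') 0)"
  have aa1: "assm_a \<nu> \<mu> Y" and af1: "assm_f r1 \<nu>" and ab1: "assm_b good \<mu> B D Y"
    using model1 unfolding model_assumptions_def by auto
  have aa2: "assm_a \<nu>' \<mu>' Y'" and af2: "assm_f r1 \<nu>'"
    using model2 unfolding model_assumptions_def by auto
  have dd1: "\<And>M. 1 \<le> M \<Longrightarrow> enat M \<le> Mbar \<Longrightarrow> assm_d M \<nu> \<mu> B D Y \<and> assm_e M good \<nu>"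
    using model1 unfolding model_assumptions_def by auto
  have dd2: "\<And>M. 1 \<le> M \<Longrightarrow> enat M \<le> Mbar \<Longrightarrow> assm_d M \<nu>' \<mu>' B' D' Y' \<and> assm_e M good \<nu>'"
    using model2 unfolding model_assumptions_def by auto
  obtain U0 where U0: "open U0" "0 \<in> U0"
    "\<And>x. x \<in> U0 \<Longrightarrow> (\<forall>r. 0 \<le> x$r) \<Longrightarrow> Ybar \<nu> \<mu> Y x = Ybar \<nu>' \<mu>' Y' x"
    using observed by blast
  have H: "moment \<nu> rs * c1 (map good rs @ [k]) = moment \<nu>' rs * c2 (map good rs @ [k])"
    if M: "1 \<le> M" "enat M \<le> Mbar" and l: "length rs = M" for M rs k
  proof -
    define O1 where "O1 = (\<lambda>x. \<integral>\<beta>. Ybar_xb \<mu> Y x \<beta> $ k \<partial>\<nu>)"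
    define O2 where "O2 = (\<lambda>x. \<integral>\<beta>. Ybar_xb \<mu>' Y' x \<beta> $ k \<partial>\<nu>')"
    have d1: "assm_d M \<nu> \<mu> B D Y" using dd1[OF M] by simp
    have d2: "assm_d M \<nu>' \<mu>' B' D' Y'" using dd2[OF M] by simp
    have pe1: "pd_exists rs O1 0" using d1 l unfolding assm_d_def O1_def by blast
    have pe2: "pd_exists rs O2 0" using d2 l unfolding assm_d_def O2_def by blast
    have eq: "O1 x = O2 x" if "x \<in> U0" "\<forall>r. 0 \<le> x$r" for x
    proof -
      have "O1 x = Ybar \<nu> \<mu> Y x $ k"
        unfolding O1_def by (rule Ybar_obs) (use aa1 in \<open>auto simp: assm_a_def\<close>)
      also have "\<dots> = Ybar \<nu>' \<mu>' Y' x $ k" using U0(3)[OF that] by simp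
      also have "\<dots> = O2 x"
        unfolding O2_def by (rule Ybar_obs[symmetric]) (use aa2 in \<open>auto simp: assm_a_def\<close>)
      finally show ?thesis .
    qed
    have "pdiff rs O1 0 = pdiff rs O2 0"
      by (rule pdiff_orthant[OF U0(1) eq U0(2) _ pe1 pe2]) auto
    then show ?thesis
      using model_H(1)[OF model1 M l, of k] model_H(1)[OF model2 M l, of k]
      unfolding O1_def O2_def c1_def c2_def by simp
  qed
  have ratio: "\<exists>lm. (\<forall>rs. length rs = M \<longrightarrow> moment \<nu>' rs = lm * moment \<nu> rs) \<and> (\<forall>ks. length ks = Suc M \<longrightarrow> c1 ks = lm * c2 ks)"
    if M: "1 \<le> M" "enat M \<le> Mbar" for M
  proof (rule ratio_lemma[where good=good])
    show "\<And>rs k. length rs = M \<Longrightarrow> moment \<nu> rs * c1 (map good rs @ [k]) = moment \<nu>' rs * c2 (map good rs @ [k])"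
      using H[OF M] by blast
    show "\<And>ks. length ks = Suc M \<Longrightarrow> c2 ks \<noteq> 0"
      using dd2[OF M] unfolding assm_d_def c2_def by blast
    show "\<And>ks. length ks = M \<Longrightarrow> \<exists>rs. map good rs = ks \<and> moment \<nu> rs \<noteq> 0"
      using dd1[OF M] unfolding assm_e_def by blast
    show "\<And>ks ks'. length ks = Suc M \<Longrightarrow> mset ks = mset ks' \<Longrightarrow> c1 ks = c1 ks'"
      using model_H(2)[OF model1 M] unfolding c1_def by blast
    show "\<And>ks ks'. length ks = Suc M \<Longrightarrow> mset ks = mset ks' \<Longrightarrow> c2 ks = c2 ks'"
      using model_H(2)[OF model2 M] unfolding c2_def by blast
  qed
  have mom1: "moment \<nu>0 [r1] = (\<integral>\<beta>. \<beta>$r1 \<partial>\<nu>0)" for \<nu>0 :: "(real^'r) measure"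
    unfolding moment_def by simp
  have P1: "(\<forall>rs. length rs = 1 \<longrightarrow> moment \<nu> rs = moment \<nu>' rs) \<and> (\<forall>ks. length ks = Suc 1 \<longrightarrow> c1 ks = c2 ks)"
    if M1: "enat 1 \<le> Mbar"
  proof -
    obtain lm where lm: "\<forall>rs. length rs = 1 \<longrightarrow> moment \<nu>' rs = lm * moment \<nu> rs"
      "\<forall>ks. length ks = Suc 1 \<longrightarrow> c1 ks = lm * c2 ks"
      using ratio[OF _ M1] by auto
    have "moment \<nu>' [r1] = lm * moment \<nu> [r1]" using lm(1) by simp
    moreover have "\<bar>moment \<nu> [r1]\<bar> = \<bar>moment \<nu>' [r1]\<bar>" "moment \<nu> [r1] \<noteq> 0"
      using scale af1 unfolding mom1 assm_f_def by auto
    ultimately have a1: "\<bar>lm\<bar> = 1" by (simp add: abs_mult)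
    define k :: 'k where "k = undefined"
    have g: "c1 [k,k] \<ge> 0" "c2 [k,k] \<ge> 0"
      using model_H(3)[OF model1 _ M1] model_H(3)[OF model2 _ M1] unfolding c1_def c2_def by auto
    have nz: "\<forall>\<gamma>::'k list. length \<gamma> = Suc 1 \<longrightarrow> pdiff \<gamma> (Vfun \<mu>' B' D') 0 \<noteq> 0"
      using dd2[OF _ M1] unfolding assm_d_def by blast
    have "c2 [k,k] \<noteq> 0" using nz unfolding c2_def by (simp del: pdiff.simps)
    then have c2p: "c2 [k,k] > 0" using g(2) by simp
    have "0 \<le> lm * c2 [k,k]" using lm(2) g(1) by simp
    then have "lm \<ge> 0" using c2p by (simp add: zero_le_mult_iff)
    then have "lm = 1" using a1 by simp
    then show ?thesis using lm by simp
  qed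
  have main: "1 \<le> M \<longrightarrow> enat M \<le> Mbar \<longrightarrow>
      (\<forall>rs. length rs = M \<longrightarrow> moment \<nu> rs = moment \<nu>' rs) \<and> (\<forall>ks. length ks = Suc M \<longrightarrow> c1 ks = c2 ks)" for M
  proof (induction M)
    case 0 then show ?case by simp
  next
    case (Suc M')
    show ?case
    proof (intro impI)
      assume M: "1 \<le> Suc M'" "enat (Suc M') \<le> Mbar"
      show "(\<forall>rs. length rs = Suc M' \<longrightarrow> moment \<nu> rs = moment \<nu>' rs) \<and> (\<forall>ks. length ks = Suc (Suc M') \<longrightarrow> c1 ks = c2 ks)"
      proof (cases "M' = 0")
        case True
        then show ?thesis using P1 M by simp
      next
        case False
        have M1: "enat 1 \<le> Mbar" using M by (metis enat_ord_simps(1) order_trans)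
        have M'b: "enat M' \<le> Mbar" using M by (metis enat_ord_simps(1) order_trans le_SucI order_refl)
        have M'1: "1 \<le> M'" using False by simp
        have IH: "\<forall>rs. length rs = M' \<longrightarrow> moment \<nu> rs = moment \<nu>' rs" using Suc.IH M'b M'1 by simp
        obtain lm where lm: "\<forall>rs. length rs = Suc M' \<longrightarrow> moment \<nu>' rs = lm * moment \<nu> rs"
          "\<forall>ks. length ks = Suc (Suc M') \<longrightarrow> c1 ks = lm * c2 ks"
          using ratio[OF M] by auto
        obtain rs where rs: "length rs = M'" "r1 \<notin> set rs" "moment_exists \<nu> rs" "moment \<nu> rs \<noteq> 0"
        proof (cases "CARD('k) = 1")
          case True
          then have "K1_condition r1 Mbar \<nu>" using K1 by simp
          then obtain rs where "length rs = Suc M' - 1" "\<forall>r\<in>set rs. r \<noteq> r1" "moment_exists \<nu> rs" "moment \<nu> rs \<noteq> 0"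
            using M unfolding K1_condition_def by blast
          then show ?thesis using that by auto
        next
          case False
          have "\<exists>k2. k2 \<noteq> good r1"
          proof (rule ccontr)
            assume "\<not> (\<exists>k2. k2 \<noteq> good r1)"
            then have u: "(UNIV :: 'k set) = {good r1}" by auto
            have "CARD('k) = card {good r1}" by (simp only: u)
            then show False using False by simp
          qed
          then obtain k2 where k2: "k2 \<noteq> good r1" by blast
          have "assm_e M' good \<nu>" using dd1[OF M'1 M'b] by simp
          then obtain rs where rs: "map good rs = replicate M' k2" "moment_exists \<nu> rs" "moment \<nu> rs \<noteq> 0"
            unfolding assm_e_def by (metis length_replicate)
          have "length rs = M'" using rs(1) by (metis length_map length_replicate)
          moreover have "r1 \<notin> set rs"
          proof
            assume "r1 \<in> set rs"
            then have "good r1 \<in> set (map good rs)" by simp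
            then show False using rs(1) k2 by (simp add: set_replicate_conv_if split: if_splits)
          qed
          ultimately show ?thesis using that rs by blast
        qed
        have ex2: "moment_exists \<nu>' rs" using dd2[OF M'1 M'b] rs(1) unfolding assm_d_def by blast
        have ps1: "prob_space \<nu>" "sets \<nu> = sets borel" using aa1 unfolding assm_a_def by auto
        have ps2: "prob_space \<nu>'" "sets \<nu>' = sets borel" using aa2 unfolding assm_a_def by auto
        have i1: "moment \<nu> (r1 # rs) = (\<integral>\<beta>. \<beta>$r1 \<partial>\<nu>) * moment \<nu> rs"
          by (rule indep_moment[OF af1 ps1 rs(2,3)])
        have i2: "moment \<nu>' (r1 # rs) = (\<integral>\<beta>. \<beta>$r1 \<partial>\<nu>') * moment \<nu>' rs"
          by (rule indep_moment[OF af2 ps2 rs(2) ex2])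
        have e12: "(\<integral>\<beta>. \<beta>$r1 \<partial>\<nu>) = (\<integral>\<beta>. \<beta>$r1 \<partial>\<nu>')"
          using P1[OF M1] mom1 by (metis One_nat_def length_Cons list.size(3))
        have e0: "(\<integral>\<beta>. \<beta>$r1 \<partial>\<nu>) \<noteq> 0" using af1 unfolding assm_f_def by simp
        have "moment \<nu>' (r1 # rs) = lm * moment \<nu> (r1 # rs)" using lm(1) rs(1) by simp
        then have "(\<integral>\<beta>. \<beta>$r1 \<partial>\<nu>) * moment \<nu> rs = lm * ((\<integral>\<beta>. \<beta>$r1 \<partial>\<nu>) * moment \<nu> rs)"
          using i1 i2 e12 IH rs(1) by simp
        then have "lm = 1" using e0 rs(4) by simp
        then show ?thesis using lm by simp
      qed
    qed
  qed
  show ?thesis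
  proof (intro allI impI)
    fix M :: nat assume "1 \<le> M \<and> enat M \<le> Mbar"
    then show "(\<forall>rs::'r list. length rs = M \<longrightarrow> moment \<nu> rs = moment \<nu>' rs) \<and>
           (\<forall>\<gamma>::'k list. length \<gamma> = Suc M \<longrightarrow>
               pdiff \<gamma> (Vfun \<mu> B D) 0 = pdiff \<gamma> (Vfun \<mu>' B' D') 0)"
      using main[of M] unfolding c1_def c2_def by simp
  qed
qed


end
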